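(* Let $G$ be a finite group. Then the commuting graph $\Gamma_C(G)$ is minimally connected if and only if $G$ is abelian.
   Context: The commuting graph $\Gamma_C(G)$ of a group $G$ is the simple undirected graph with vertex set $G$ in which two distinct elements $x,y$ are adjacent if and only if $xy=yx$. For a connected graph $\Gamma$, a vertex cut-set is a set $S$ of vertices such that $\Gamma-S$ is disconnected or has just one vertex, and the vertex connectivity $\kappa(\Gamma)$ is the smallest size of a vertex cut-set. $\Gamma$ is minimally connected if $\kappa(\Gamma-\epsilon)=\kappa(\Gamma)-1$ for every edge $\epsilon$ of $\Gamma$. *)

theory Defs
  imports "HOL-Algebra.Group"
begin

text \<open>A finite simple graph is represented as a pair (V, E) of a vertex set and a set
of edges, each edge being a two-element subset of V.\<close>

type_synonym 'a sgraph = "'a set \<times> 'a set set"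

definition commuting_graph :: "('a, 'b) monoid_scheme \<Rightarrow> 'a sgraph" where
  "commuting_graph G = (carrier G,
     {{x, y} | x y. x \<in> carrier G \<and> y \<in> carrier G \<and> x \<noteq> y \<and>
                    x \<otimes>\<^bsub>G\<^esub> y = y \<otimes>\<^bsub>G\<^esub> x})"

definition gadj :: "'a set set \<Rightarrow> 'a set \<Rightarrow> 'a \<Rightarrow> 'a \<Rightarrow> bool" where
  "gadj E W x y \<longleftrightarrow> x \<in> W \<and> y \<in> W \<and> {x, y} \<in> E"

definition graph_connected :: "'a sgraph \<Rightarrow> bool" where
  "graph_connected \<Gamma> \<longleftrightarrow>
     (\<forall>x\<in>fst \<Gamma>. \<forall>y\<in>fst \<Gamma>. (gadj (snd \<Gamma>) (fst \<Gamma>))\<^sup>*\<^sup>* x y)"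

definition vertex_cut_set :: "'a sgraph \<Rightarrow> 'a set \<Rightarrow> bool" where
  "vertex_cut_set \<Gamma> S \<longleftrightarrow> S \<subseteq> fst \<Gamma> \<and>
     (\<not> graph_connected (fst \<Gamma> - S, snd \<Gamma>) \<or> card (fst \<Gamma> - S) = 1)"

definition vertex_connectivity :: "'a sgraph \<Rightarrow> nat" where
  "vertex_connectivity \<Gamma> = (LEAST k. \<exists>S. vertex_cut_set \<Gamma> S \<and> card S = k)"

definition delete_edge :: "'a sgraph \<Rightarrow> 'a set \<Rightarrow> 'a sgraph" where
  "delete_edge \<Gamma> e = (fst \<Gamma>, snd \<Gamma> - {e})"

definition minimally_connected :: "'a sgraph \<Rightarrow> bool" where
  "minimally_connected \<Gamma> \<longleftrightarrow> graph_connected \<Gamma> \<and>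
     (\<forall>e\<in>snd \<Gamma>. vertex_connectivity (delete_edge \<Gamma> e) = vertex_connectivity \<Gamma> - 1)"

end

theory Submission
  imports Defs
begin

lemma conn_hub:
  assumes "\<And>u v. u \<in> W \<Longrightarrow> v \<in> W \<Longrightarrow> u \<noteq> v \<Longrightarrow>
     gadj E W u v \<or> (\<exists>w. gadj E W u w \<and> gadj E W w v)"
  shows "graph_connected (W, E)"
  unfolding graph_connected_def fst_conv snd_conv
proof (intro ballI)
  fix u v assume uv: "u \<in> W" "v \<in> W"
  show "(gadj E W)\<^sup>*\<^sup>* u v"
  proof (cases "u = v")
    case True then show ?thesis by simp
  next
    case False
    then show ?thesis using assms[OF uv False]
      by (meson converse_rtranclp_into_rtranclp r_into_rtranclp)
  qed
qed

lemma vc_le: "vertex_cut_set \<Gamma> S \<Longrightarrow> vertex_connectivity \<Gamma> \<le> card S"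
  unfolding vertex_connectivity_def by (rule Least_le) blast

lemma vc_ex: "vertex_cut_set \<Gamma> S \<Longrightarrow> \<exists>T. vertex_cut_set \<Gamma> T \<and> card T = vertex_connectivity \<Gamma>"
  unfolding vertex_connectivity_def by (rule LeastI[of _ "card S"]) blast

lemma vc_ge: assumes "\<exists>S. vertex_cut_set \<Gamma> S" "\<And>T. vertex_cut_set \<Gamma> T \<Longrightarrow> k \<le> card T"
  shows "k \<le> vertex_connectivity \<Gamma>"
  using vc_ex assms by metis

lemma cut_pair:
  assumes "a \<in> V" "b \<in> V" "a \<noteq> b" "{a,b} \<notin> E"
  shows "vertex_cut_set (V,E) (V - {a,b})"
proof -
  have VV: "V - (V - {a,b}) = {a,b}" using assms by auto
  have "(gadj E {a,b})\<^sup>*\<^sup>* a v \<Longrightarrow> v = a" for v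
  proof (induction rule: rtranclp_induct)
    case base then show ?case by simp
  next
    case (step y z)
    then show ?case using assms(4) unfolding gadj_def by auto
  qed
  hence "\<not> graph_connected ({a,b}, E)"
    unfolding graph_connected_def using assms(3) by auto
  then show ?thesis unfolding vertex_cut_set_def using VV by auto
qed

lemma cg_eq: "commuting_graph G = (carrier G, snd (commuting_graph G))"
  by (simp add: commuting_graph_def)

lemma cg_edge: "{x,y} \<in> snd (commuting_graph G) \<longleftrightarrow>
   x \<in> carrier G \<and> y \<in> carrier G \<and> x \<noteq> y \<and> x \<otimes>\<^bsub>G\<^esub> y = y \<otimes>\<^bsub>G\<^esub> x"
  unfolding commuting_graph_def snd_conv
  by (auto simp: doubleton_eq_iff)

lemma cg_connected:
  assumes "group G"
  shows "graph_connected (commuting_graph G)"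
proof -
  interpret group G by fact
  show ?thesis
    apply (subst cg_eq)
    apply (rule conn_hub)
    apply (simp add: gadj_def cg_edge)
    by (metis l_one r_one one_closed)
qed

lemma abelian_part:
  assumes cgp: "comm_group G" and fin: "finite (carrier G)"
  and e: "e \<in> snd (commuting_graph G)"
  shows "vertex_connectivity (delete_edge (commuting_graph G) e) = vertex_connectivity (commuting_graph G) - 1"
proof -
  interpret comm_group G by fact
  define V where "V = carrier G"
  define E where "E = snd (commuting_graph G)"
  have CG: "commuting_graph G = (V, E)" unfolding V_def E_def by (simp add: commuting_graph_def)
  have DE: "delete_edge (V,E) e = (V, E - {e})" by (simp add: delete_edge_def)
  have finV: "finite V" using fin V_def by simp
  obtain a b where ab: "e = {a,b}" "a \<in> V" "b \<in> V" "a \<noteq> b"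
    using e unfolding E_def V_def commuting_graph_def by auto
  have adj: "\<And>u v. u \<in> V \<Longrightarrow> v \<in> V \<Longrightarrow> u \<noteq> v \<Longrightarrow> {u,v} \<in> E"
    unfolding E_def V_def using m_comm by (simp add: cg_edge)
  have "card {a,b} \<le> card V" using ab finV by (intro card_mono) auto
  hence n2: "card V \<ge> 2" using ab by simp
  have cut1: "vertex_cut_set (V,E) (V - {a})"
    unfolding vertex_cut_set_def using ab by (auto simp: Diff_Diff_Int Int_absorb1)
  have k1: "vertex_connectivity (V,E) = card V - 1"
  proof (rule antisym)
    show "vertex_connectivity (V,E) \<le> card V - 1"
      using vc_le[OF cut1] ab finV by (simp add: card_Diff_singleton)
  next
    show "card V - 1 \<le> vertex_connectivity (V,E)"
    proof (rule vc_ge)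
      show "\<exists>S. vertex_cut_set (V,E) S" using cut1 by blast
    next
      fix T assume T: "vertex_cut_set (V,E) T"
      show "card V - 1 \<le> card T"
      proof (rule ccontr)
        assume "\<not> ?thesis"
        moreover have "T \<subseteq> V" using T unfolding vertex_cut_set_def by simp
        ultimately have c: "card (V - T) \<ge> 2" using finV
          by (simp add: card_Diff_subset finite_subset)
        have "graph_connected (V - T, E)" by (rule conn_hub) (auto simp: gadj_def adj)
        with T c show False unfolding vertex_cut_set_def by auto
      qed
    qed
  qed
  have cut2: "vertex_cut_set (V,E - {e}) (V - {a,b})"
    by (rule cut_pair) (use ab in auto)
  have k2: "vertex_connectivity (V,E - {e}) = card V - 2"
  proof (rule antisym)
    show "vertex_connectivity (V,E - {e}) \<le> card V - 2"
      using vc_le[OF cut2] ab finV by (simp add: card_Diff_subset)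
  next
    show "card V - 2 \<le> vertex_connectivity (V,E - {e})"
    proof (rule vc_ge)
      show "\<exists>S. vertex_cut_set (V,E - {e}) S" using cut2 by blast
    next
      fix T assume T: "vertex_cut_set (V,E - {e}) T"
      show "card V - 2 \<le> card T"
      proof (rule ccontr)
        assume "\<not> ?thesis"
        moreover have TV: "T \<subseteq> V" using T unfolding vertex_cut_set_def by simp
        ultimately have c: "card (V - T) \<ge> 3" using finV
          by (simp add: card_Diff_subset finite_subset)
        have "\<not> (V - T \<subseteq> {a,b})"
        proof
          assume "V - T \<subseteq> {a,b}"
          hence "card (V - T) \<le> card {a,b}" by (intro card_mono) auto
          also have "\<dots> \<le> 2" by (simp add: card_insert_le_m1)
          finally show False using c by simp
        qed
        then obtain w where w: "w \<in> V - T" "w \<notin> {a,b}" by blast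
        have "graph_connected (V - T, E - {e})"
        proof (rule conn_hub)
          fix u v assume uv: "u \<in> V - T" "v \<in> V - T" "u \<noteq> v"
          show "gadj (E - {e}) (V - T) u v \<or> (\<exists>w. gadj (E - {e}) (V - T) u w \<and> gadj (E - {e}) (V - T) w v)"
          proof (cases "{u,v} = e")
            case False then show ?thesis using uv adj by (auto simp: gadj_def)
          next
            case True
            then have "u \<in> {a,b}" "v \<in> {a,b}" using ab by (auto simp: doubleton_eq_iff)
            then have "gadj (E - {e}) (V - T) u w \<and> gadj (E - {e}) (V - T) w v"
              using uv w adj ab by (auto simp: gadj_def doubleton_eq_iff)
            then show ?thesis by blast
          qed
        qed
        with T c show False unfolding vertex_cut_set_def by auto
      qed
    qed
  qed
  show ?thesis unfolding CG DE k1 k2 by simp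
qed


lemma nonab_part:
  fixes G (structure)
  assumes grp: "group G" and fin: "finite (carrier G)" and nc: "\<not> comm_group G"
  shows "\<exists>e\<in>snd (commuting_graph G). vertex_connectivity (delete_edge (commuting_graph G) e) \<noteq> vertex_connectivity (commuting_graph G) - 1"
proof -
  interpret group G by fact
  define V where "V = carrier G"
  define E where "E = snd (commuting_graph G)"
  have CG: "commuting_graph G = (V, E)" unfolding V_def E_def by (simp add: commuting_graph_def)
  have finV: "finite V" using fin V_def by simp
  have Eiff: "\<And>u v. {u,v} \<in> E \<longleftrightarrow> u \<in> V \<and> v \<in> V \<and> u \<noteq> v \<and> u \<otimes> v = v \<otimes> u"
    unfolding E_def V_def by (rule cg_edge)
  obtain p q where pq: "p \<in> V" "q \<in> V" "p \<otimes> q \<noteq> q \<otimes> p"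
    using nc group_comm_groupI unfolding V_def by blast
  have pqne: "p \<noteq> q" using pq by auto
  obtain x where x: "x \<in> V" "x \<noteq> inv x"
  proof (rule ccontr)
    assume "\<not> thesis"
    with that have all: "\<And>x. x \<in> V \<Longrightarrow> x = inv x" by blast
    have "p \<otimes> q = q \<otimes> p"
    proof -
      have "p \<otimes> q = inv (p \<otimes> q)" using all pq unfolding V_def by simp
      also have "\<dots> = inv q \<otimes> inv p" using pq unfolding V_def by (simp add: inv_mult_group)
      also have "\<dots> = q \<otimes> p" using all pq by metis
      finally show ?thesis .
    qed
    with pq show False by simp
  qed
  define y where "y = inv x"
  have y: "y \<in> V" using x unfolding y_def V_def by simp
  define e where "e = {x,y}"
  have eE: "e \<in> E" unfolding e_def y_def using x Eiff unfolding V_def by auto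
  have comm: "\<And>w. w \<in> V \<Longrightarrow> w \<otimes> x = x \<otimes> w \<Longrightarrow> w \<otimes> y = y \<otimes> w"
  proof -
    fix w assume w: "w \<in> V" "w \<otimes> x = x \<otimes> w"
    have xc: "x \<in> carrier G" and wc: "w \<in> carrier G" using x w V_def by auto
    have "w \<otimes> inv x = inv x \<otimes> (x \<otimes> w) \<otimes> inv x" using xc wc by (simp add: m_assoc[symmetric])
    also have "\<dots> = inv x \<otimes> (w \<otimes> x) \<otimes> inv x" using w by simp
    also have "\<dots> = inv x \<otimes> w" using xc wc by (simp add: m_assoc)
    finally show "w \<otimes> y = y \<otimes> w" unfolding y_def .
  qed
  have comm2: "\<And>w. w \<in> V \<Longrightarrow> w \<otimes> y = y \<otimes> w \<Longrightarrow> w \<otimes> x = x \<otimes> w"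
  proof -
    fix w assume w: "w \<in> V" "w \<otimes> y = y \<otimes> w"
    have yc: "y \<in> carrier G" and wc: "w \<in> carrier G" using y w V_def by auto
    have xc: "x \<in> carrier G" using x V_def by simp
    have "w \<otimes> x = x \<otimes> (y \<otimes> w) \<otimes> x" using xc wc unfolding y_def by (simp add: m_assoc[symmetric])
    also have "\<dots> = x \<otimes> (w \<otimes> y) \<otimes> x" using w by simp
    also have "\<dots> = x \<otimes> w" using xc wc unfolding y_def by (simp add: m_assoc)
    finally show "w \<otimes> x = x \<otimes> w" .
  qed
  have pqE: "{p,q} \<notin> E" using Eiff pq by auto
  have cutA: "vertex_cut_set (V,E) (V - {p,q})" by (rule cut_pair) (use pq pqne pqE in auto)
  have cutB: "vertex_cut_set (V,E - {e}) (V - {p,q})" by (rule cut_pair) (use pq pqne pqE in auto)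
  have kle: "vertex_connectivity (V,E) \<le> card V - 2"
    using vc_le[OF cutA] pq pqne finV by (simp add: card_Diff_subset)
  have conn: "graph_connected (V,E)" using cg_connected[OF grp] CG by simp
  have "card {p,q} \<le> card V" using pq finV by (intro card_mono) auto
  hence n2: "card V \<ge> 2" using pqne by simp
  have kpos: "vertex_connectivity (V,E) \<ge> 1"
  proof (rule ccontr)
    assume "\<not> ?thesis"
    then obtain S where S: "vertex_cut_set (V,E) S" "card S = 0" using vc_ex[OF cutA] by auto
    then have "S \<subseteq> V" unfolding vertex_cut_set_def by simp
    with S finV have "S = {}" using finite_subset by fastforce
    with S conn n2 show False unfolding vertex_cut_set_def by auto
  qed
  have kge: "vertex_connectivity (V,E) \<le> vertex_connectivity (V,E - {e})"
  proof (rule vc_ge)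
    show "\<exists>S. vertex_cut_set (V,E - {e}) S" using cutB by blast
  next
    fix T assume T: "vertex_cut_set (V,E - {e}) T"
    have TV: "T \<subseteq> V" using T unfolding vertex_cut_set_def by simp
    show "vertex_connectivity (V,E) \<le> card T"
    proof (rule ccontr)
      assume lt: "\<not> ?thesis"
      hence "\<not> vertex_cut_set (V,E) T" using vc_le by metis
      hence con: "graph_connected (V - T, E)" and c1: "card (V - T) \<noteq> 1"
        using TV unfolding vertex_cut_set_def by auto
      hence ncon: "\<not> graph_connected (V - T, E - {e})" using T unfolding vertex_cut_set_def by auto
      define W where "W = V - T"
      show False
      proof (cases "x \<in> T \<or> y \<in> T")
        case True
        have "gadj (E - {e}) W = gadj E W"
          using True unfolding W_def gadj_def e_def by (auto simp: doubleton_eq_iff fun_eq_iff)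
        then show False using con ncon unfolding W_def graph_connected_def by simp
      next
        case False
        hence xW: "x \<in> W" and yW: "y \<in> W" using x y unfolding W_def by auto
        show False
        proof (cases "\<exists>w\<in>W. w \<notin> {x,y} \<and> w \<otimes> x = x \<otimes> w")
          case True
          then obtain w where w: "w \<in> W" "w \<notin> {x,y}" "w \<otimes> x = x \<otimes> w" by blast
          have wV: "w \<in> V" using w W_def by auto
          have wy: "w \<otimes> y = y \<otimes> w" using comm wV w by simp
          have "gadj E W \<le> (gadj (E - {e}) W)\<^sup>*\<^sup>*"
          proof (intro predicate2I)
            fix u v assume uv: "gadj E W u v"
            show "(gadj (E - {e}) W)\<^sup>*\<^sup>* u v"
            proof (cases "{u,v} = e")
              case False then show ?thesis using uv by (auto simp: gadj_def)
            next
              case True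
              hence "u \<in> {x,y}" "v \<in> {x,y}" unfolding e_def by (auto simp: doubleton_eq_iff)
              then have "gadj (E - {e}) W u w \<and> gadj (E - {e}) W w v"
                using xW yW w wy wV x y Eiff W_def unfolding e_def
                by (auto simp: gadj_def doubleton_eq_iff)
              then show ?thesis by (meson converse_rtranclp_into_rtranclp r_into_rtranclp)
            qed
          qed
          hence le: "(gadj E W)\<^sup>*\<^sup>* \<le> (gadj (E - {e}) W)\<^sup>*\<^sup>*"
            using rtranclp_mono[of "gadj E W" "(gadj (E - {e}) W)\<^sup>*\<^sup>*"] by simp
          have "graph_connected (V - T, E - {e})"
            unfolding graph_connected_def fst_conv snd_conv
          proof (intro ballI)
            fix a b assume "a \<in> V - T" "b \<in> V - T"
            hence "(gadj E W)\<^sup>*\<^sup>* a b" using con unfolding graph_connected_def W_def by simp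
            thus "(gadj (E - {e}) (V - T))\<^sup>*\<^sup>* a b" using le unfolding W_def by (rule predicate2D[rotated])
          qed
          then show False using ncon by simp
        next
          case False
          have reach: "(gadj E W)\<^sup>*\<^sup>* x v \<Longrightarrow> v \<in> {x,y}" for v
          proof (induction rule: rtranclp_induct)
            case base then show ?case by simp
          next
            case (step u z)
            hence zW: "z \<in> W" and uz: "{u,z} \<in> E" unfolding gadj_def by auto
            hence zV: "z \<in> V" and uzc: "u \<otimes> z = z \<otimes> u" using Eiff by auto
            have "z \<otimes> x = x \<otimes> z"
            proof (cases "u = x")
              case True then show ?thesis using uzc by simp
            next
              case False
              hence "u = y" using step by simp
              then show ?thesis using comm2 zV uzc by simp
            qed
            then show ?case using False zW by blast
          qed
          have "W \<subseteq> {x,y}" using con reach xW unfolding W_def graph_connected_def by auto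
          hence "T = V - {x,y}" using xW yW TV unfolding W_def by auto
          moreover have "x \<noteq> y" using x unfolding y_def by simp
          ultimately have "card T = card V - 2" using x y finV
            by (simp add: card_Diff_subset)
          then show False using lt kle by simp
        qed
      qed
    qed
  qed
  have "vertex_connectivity (delete_edge (V,E) e) \<noteq> vertex_connectivity (V,E) - 1"
    using kge kpos by (simp add: delete_edge_def)
  then show ?thesis using eE CG by auto
qed

theorem mainTheorem8:
  fixes G (structure)
  assumes "group G" and "finite (carrier G)"
  shows "minimally_connected (commuting_graph G) \<longleftrightarrow> comm_group G"
  using abelian_part[OF _ assms(2)] nonab_part[OF assms] cg_connected[OF assms(1)]
  unfolding minimally_connected_def by blast

end
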